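(* Let $n$ be a positive integer. Then $$ \sum_{k=0}^{n-1}[4k-1]_{q^2}[4k-1]^2\frac{(q^{-2};q^4)_k^4}{(q^4;q^4)_k^4}q^{4k} =(q^{2n}+1)^4[n]_{q^2}^4\frac{(q^{-2};q^4)^4_{n}}{(q^4;q^4)_{n}^4} \left(2\cdot\frac{q^5+q^{4n+1}(q^{4n-2}-q^2-1)}{(q^2-1)^2}-q^{4n}\right). $$
   Context: $q$ is an indeterminate. For an integer $m$, $[m]=[m]_q=(1-q^m)/(1-q)$ and $[m]_{q^2}=(1-q^{2m})/(1-q^2)$. The $q$-shifted factorial is $(a;q)_0=1$ and $(a;q)_k=(1-a)(1-aq)\cdots(1-aq^{k-1})$ for $k\ge1$. The identity is an identity of rational functions in $q$. *)

theory Defs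
  imports "HOL-Computational_Algebra.Polynomial" "HOL-Computational_Algebra.Fraction_Field"
begin

definition qint :: "'a::field \<Rightarrow> int \<Rightarrow> 'a" where
  "qint q m = (1 - q powi m) / (1 - q)"

definition qpoch :: "'a::field \<Rightarrow> 'a \<Rightarrow> nat \<Rightarrow> 'a" where
  "qpoch a q k = (\<Prod>i<k. 1 - a * q ^ i)"

text \<open>The indeterminate q as an element of the field of rational functions R(q).\<close>
definition qvar :: "real poly fract" where
  "qvar = Fract [:0, 1:] 1"

end

theory Submission
  imports Defs
begin
lemma polyid:
  fixes q x :: "'a::field"
  shows "(q^2-x^2)^4 * (2*(q^6+(q^2*x)^4-q^4*(q^2*x)^2-q^2*(q^2*x)^2)-q*(q^2*x)^2*(q^2-1)^2)
   = q^8*(1-x^2)^4*(2*(q^6+x^4-q^4*x^2-q^2*x^2)-q*x^2*(q^2-1)^2) + (q^2-x^4)*(q-x^2)^2*(1+q)^2*x^2*q^5*(1-q^2)^3"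
  by (simp add: algebra_simps power2_eq_square power3_eq_cube power4_eq_xxxx eval_nat_numeral)

lemma brk:
  fixes q y :: "'a::field"
  assumes "q \<noteq> 0" "1 - q^2 \<noteq> 0"
  shows "2*(q^5 + y^2*q*(y^2/q^2 - q^2 - 1))/(q^2-1)^2 - y^2
     = (2*(q^6+y^4-q^4*y^2-q^2*y^2)-q*y^2*(q^2-1)^2) / (q*(1-q^2)^2)"
proof -
  have g: "\<And>N D. D \<noteq> 0 \<Longrightarrow> 2*(N/q)/D - y^2 = (2*N - q*y^2*D)/(q*D)"
    using assms(1) by (simp add: field_simps)
  have h1: "(q^2-1)^2 = (1-q^2)^2" by (simp add: power2_commute)
  have h2: "q^5 + y^2*q*(y^2/q^2 - q^2 - 1) = (q^6+y^4-q^4*y^2-q^2*y^2)/q"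
    using assms by (simp add: field_simps eval_nat_numeral)
  have D: "(1-q^2)^2 \<noteq> 0" using assms by simp
  show ?thesis unfolding h1 h2 by (rule g[OF D])
qed

lemma step:
  fixes q x a :: "'a::field"
  assumes q: "q \<noteq> 0" and q1: "1 - q \<noteq> 0" and q2: "1 + q \<noteq> 0" and d: "1 - q^4*x^2 \<noteq> 0"
  shows "((q^2*x)+1)^4 * ((1-(q^2*x))/(1-q^2))^4 * (a*(1-x^2/q^2)/(1-q^4*x^2))^4 * (2*(q^5 + (q^2*x)^2*q*((q^2*x)^2/q^2 - q^2 - 1))/(q^2-1)^2 - (q^2*x)^2)
   = (x+1)^4 * ((1-x)/(1-q^2))^4 * a^4 * (2*(q^5 + x^2*q*(x^2/q^2 - q^2 - 1))/(q^2-1)^2 - x^2)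
     + (1 - x^4/q^2)/(1-q^2) * ((1 - x^2/q)/(1-q))^2 * a^4 * x^2"
proof -
  define c where "c = 1 - q^2"
  define B where "B y = 2*(q^6+y^4-q^4*y^2-q^2*y^2)-q*y^2*(q^2-1)^2" for y
  have cq: "c = (1-q)*(1+q)" unfolding c_def by algebra
  have c0: "c \<noteq> 0" using cq q1 q2 by simp
  have c0': "1 - q^2 \<noteq> 0" using c0 c_def by simp
  have e: "1 - q^4*x^2 = (1 - q^2*x) * (1 + q^2*x)" by algebra
  have L1: "((q^2*x)+1)^4 * ((1-(q^2*x))/(1-q^2))^4 = (1 - q^4*x^2)^4 / c^4"
  proof -
    have gen: "\<And>u v w::'a. (u+1)^4*(v/w)^4 = (v*(1+u))^4/w^4"
      by (simp add: power_divide power_mult_distrib add.commute)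
    have "((q^2*x)+1)^4 * ((1-(q^2*x))/(1-q^2))^4 = ((1-q^2*x)*(1+q^2*x))^4/c^4"
      unfolding c_def by (rule gen)
    then show ?thesis unfolding e .
  qed
  have L2: "(a*(1-x^2/q^2)/(1-q^4*x^2))^4 = a^4 * (q^2-x^2)^4 / (q^8 * (1-q^4*x^2)^4)"
  proof -
    have "1-x^2/q^2 = (q^2-x^2)/q^2" using q by (simp add: field_simps)
    then show ?thesis by (simp add: power_divide power_mult_distrib flip: power_mult)
  qed
  have LHS: "((q^2*x)+1)^4 * ((1-(q^2*x))/(1-q^2))^4 * (a*(1-x^2/q^2)/(1-q^4*x^2))^4 * (2*(q^5 + (q^2*x)^2*q*((q^2*x)^2/q^2 - q^2 - 1))/(q^2-1)^2 - (q^2*x)^2)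
     = a^4 * ((q^2-x^2)^4 * B (q^2*x)) / (q^9 * c^6)"
  proof -
    have gen: "\<And>D A P E. D \<noteq> 0 \<Longrightarrow> D/c^4*(A*P/(q^8*D))*(E/(q*c^2)) = A*(P*E)/(q^9*c^6)"
      using q c0 by (simp add: field_simps eval_nat_numeral)
    have "(1-q^4*x^2)^4 \<noteq> 0" using d by simp
    from gen[OF this] show ?thesis
      unfolding L1 L2 brk[OF q c0'] unfolding B_def c_def[symmetric] .
  qed
  have R1: "(x+1)^4 * ((1-x)/(1-q^2))^4 * a^4 * (2*(q^5 + x^2*q*(x^2/q^2 - q^2 - 1))/(q^2-1)^2 - x^2)
     = a^4 * (q^8*(1-x^2)^4 * B x) / (q^9 * c^6)"
  proof -
    have "(x+1)^4 * ((1-x)/(1-q^2))^4 = (1-x^2)^4 / c^4"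
      unfolding c_def by (simp add: power_divide power_mult_distrib algebra_simps power2_eq_square flip: power_mult_distrib)
    then show ?thesis unfolding brk[OF q c0'] B_def c_def[symmetric] using q c0
      by (simp add: field_simps eval_nat_numeral)
  qed
  have R2: "(1 - x^4/q^2)/(1-q^2) * ((1 - x^2/q)/(1-q))^2 * a^4 * x^2
     = a^4 * ((q^2-x^4)*(q-x^2)^2*(1+q)^2*x^2*q^5*c^3) / (q^9 * c^6)"
  proof -
    have f1: "1 - x^4/q^2 = (q^2-x^4)/q^2" "1 - x^2/q = (q - x^2)/q" using q by (simp_all add: field_simps)
    have f2: "1 - q = c / (1+q)" using cq q2 by (simp add: field_simps)
    have gen: "\<And>Q P. (Q/q^2)/c * ((P/q)/(c/(1+q)))^2 * a^4 * x^2 = a^4 * (Q*P^2*(1+q)^2*x^2*q^5*c^3) / (q^9 * c^6)"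
      using q c0 q2 by (simp add: field_simps eval_nat_numeral)
    show ?thesis unfolding f1 f2 unfolding c_def[symmetric] by (rule gen)
  qed
  have X: "(q^2-x^2)^4 * B (q^2*x) = q^8*(1-x^2)^4 * B x + (q^2-x^4)*(q-x^2)^2*(1+q)^2*x^2*q^5*c^3"
    unfolding B_def c_def by (rule polyid)
  have gen: "\<And>A X Y Z D::'a. X = Y + Z \<Longrightarrow> A*X/D = A*Y/D + A*Z/D"
    by (simp add: distrib_left add_divide_distrib)
  show ?thesis unfolding LHS R1 R2 by (rule gen[OF X])
qed
lemma pw1: "(q::'a::field) \<noteq> 0 \<Longrightarrow> q powi (4 * int k - 1) = (q^(2*k))^2 / q"
proof -
  assume q: "q \<noteq> 0"
  have e: "4 * int k - 1 = int (4*k) - 1" by simp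
  have "q powi (4 * int k - 1) = q powi (int (4*k)) / q powi 1"
    unfolding e using q by (rule power_int_diff[OF disjI1])
  also have "\<dots> = q^(4*k) / q"
  proof -
    have "q powi (1::int) = q" by (metis power_int_of_nat of_nat_1 power_one_right)
    then show ?thesis by (simp only: power_int_of_nat)
  qed
  also have "\<dots> = (q^(2*k))^2 / q" by (simp flip: power_mult add: mult.commute mult.left_commute)
  finally show ?thesis .
qed

lemma mainlem:
  fixes q :: "'a::field"
  assumes q: "q \<noteq> 0" and qm: "\<And>m. m > 0 \<Longrightarrow> q^m \<noteq> 1"
  shows "(\<Sum>k<n. qint (q^2) (4 * int k - 1) * (qint q (4 * int k - 1))^2
        * (qpoch (q powi (-2)) (q^4) k)^4 / (qpoch (q^4) (q^4) k)^4 * q^(4*k))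
   = (q^(2*n)+1)^4 * ((1-q^(2*n))/(1-q^2))^4 * (qpoch (q powi (-2)) (q^4) n / qpoch (q^4) (q^4) n)^4
      * (2*(q^5 + (q^(2*n))^2*q*((q^(2*n))^2/q^2 - q^2 - 1))/(q^2-1)^2 - (q^(2*n))^2)"
proof (induction n)
  case 0
  then show ?case by simp
next
  case (Suc n)
  define x where "x = q^(2*n)"
  define a where "a = qpoch (q powi (-2)) (q^4) n / qpoch (q^4) (q^4) n"
  have q1: "1 - q \<noteq> 0" using qm[of 1] by auto
  have q2: "1 + q \<noteq> 0"
  proof
    assume "1 + q = 0" then have "q = -1" by (simp add: add_eq_0_iff)
    then have "q^2 = 1" by simp
    with qm[of 2] show False by simp
  qed
  have x4: "(q^4)^n = x^2" unfolding x_def by (simp flip: power_mult add: mult.commute)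
  have d: "1 - q^4*x^2 \<noteq> 0"
  proof
    assume "1 - q^4*x^2 = 0"
    moreover have "q^(4*n+4) = q^4*x^2"
    proof -
      have "4*n+4 = 4 + 2*n*2" by simp
      then show ?thesis unfolding x_def by (simp only: power_add power_mult)
    qed
    ultimately have "q^(4*n+4) = 1" by simp
    with qm[of "4*n+4"] show False by simp
  qed
  have xs: "q^(2*Suc n) = q^2*x"
  proof -
    have "2*Suc n = 2 + 2*n" by simp
    then show ?thesis unfolding x_def by (simp only: power_add)
  qed
  have as: "qpoch (q powi (-2)) (q^4) (Suc n) / qpoch (q^4) (q^4) (Suc n) = a*(1-x^2/q^2)/(1-q^4*x^2)"
    unfolding a_def qpoch_def by (simp add: x4[unfolded qpoch_def] power_int_minus_divide x4)
  have t: "qint (q^2) (4 * int n - 1) * (qint q (4 * int n - 1))^2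
        * (qpoch (q powi (-2)) (q^4) n)^4 / (qpoch (q^4) (q^4) n)^4 * q^(4*n)
     = (1 - x^4/q^2)/(1-q^2) * ((1 - x^2/q)/(1-q))^2 * a^4 * x^2"
  proof -
    have "(q^2) powi (4 * int n - 1) = x^4/q^2"
      using q by (simp add: pw1 x_def flip: power_mult)
    moreover have "q powi (4 * int n - 1) = x^2/q" using pw1[OF q] x_def by (simp add: power2_eq_square)
    moreover have "q^(4*n) = x^2" unfolding x_def by (simp flip: power_mult add: mult.commute)
    ultimately show ?thesis unfolding a_def qint_def by (simp add: power_divide)
  qed
  show ?case
    unfolding sum.lessThan_Suc Suc.IH t xs as
    unfolding x_def[symmetric] a_def[symmetric]
    by (rule step[OF q q1 q2 d, symmetric])
qed

lemma qvar_pow: "qvar ^ m = Fract ([:0,1:] ^ m) 1"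
  by (induction m) (simp_all add: qvar_def One_fract_def)

lemma qvar_ne0: "qvar \<noteq> 0"
  unfolding qvar_def Zero_fract_def by (simp add: eq_fract)

lemma qvar_pow_ne1: "m > 0 \<Longrightarrow> qvar ^ m \<noteq> 1"
proof
  assume m: "m > 0" and "qvar ^ m = 1"
  then have "[:0,1::real:] ^ m = 1" unfolding qvar_pow One_fract_def by (simp add: eq_fract)
  then have "degree ([:0,1::real:] ^ m) = 0" by simp
  moreover have "degree ([:0,1::real:] ^ m) = m" by (simp add: degree_power_eq)
  ultimately show False using m by simp
qed

theorem theorem2:
  fixes n :: nat
  assumes "n \<ge> 1"
  shows "(let q = qvar in
     (\<Sum>k<n. qint (q^2) (4 * int k - 1) * (qint q (4 * int k - 1))^2
        * (qpoch (q powi (-2)) (q^4) k)^4 / (qpoch (q^4) (q^4) k)^4 * q^(4*k))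
   = (q^(2*n) + 1)^4 * (qint (q^2) (int n))^4
        * (qpoch (q powi (-2)) (q^4) n)^4 / (qpoch (q^4) (q^4) n)^4
        * (2 * (q^5 + q^(4*n+1) * (q^(4*n-2) - q^2 - 1)) / (q^2 - 1)^2 - q^(4*n)))"
proof -
  define q where "q = qvar"
  have q: "q \<noteq> 0" using qvar_ne0 q_def by simp
  have q2: "q^2 \<noteq> 0" using q by simp
  have e1: "qint (q^2) (int n) = (1-q^(2*n))/(1-q^2)" unfolding qint_def by (simp add: power_mult)
  have e2: "q^(4*n) = (q^(2*n))^2" by (simp flip: power_mult add: mult.commute)
  have e3: "q^(4*n+1) = (q^(2*n))^2*q" using e2 by simp
  have e4: "q^(4*n-2) = (q^(2*n))^2/q^2"
  proof -
    have "4*n = (4*n-2) + 2" using assms by simp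
    then have "q^(4*n) = q^(4*n-2) * q^2" by (metis power_add)
    then show ?thesis using q2 e2 by (simp add: field_simps)
  qed
  have M: "\<And>A B P Q C::real poly fract. A*B*P/Q*C = A*B*(P/Q)*C" by simp
  note L = mainlem[OF q qvar_pow_ne1[folded q_def], of n]
  have R: "(q^(2*n) + 1)^4 * (qint (q^2) (int n))^4
        * (qpoch (q powi (-2)) (q^4) n)^4 / (qpoch (q^4) (q^4) n)^4
        * (2 * (q^5 + q^(4*n+1) * (q^(4*n-2) - q^2 - 1)) / (q^2 - 1)^2 - q^(4*n))
     = (q^(2*n)+1)^4 * ((1-q^(2*n))/(1-q^2))^4 * (qpoch (q powi (-2)) (q^4) n / qpoch (q^4) (q^4) n)^4
      * (2*(q^5 + (q^(2*n))^2*q*((q^(2*n))^2/q^2 - q^2 - 1))/(q^2-1)^2 - (q^(2*n))^2)"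
    unfolding e1 e3 e4 e2 M power_divide ..
  show ?thesis
    unfolding Let_def q_def[symmetric] by (rule trans[OF L R[symmetric]])
qed

end
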